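(* If the anti-rotor $\mathfrak{u}_A$ of an algebra $A$ is one-dimensional and contains a nonsingular matrix, then $A$ is simple.
   Context: An "algebra" is a real finite-dimensional unital associative algebra with underlying vector space $\mathbb{R}^n$, standard basis, elements column vectors $s=(x_1,\dots,x_n)^T$, $\mathbf{d}s=(dx_1,\dots,dx_n)^T$. An uncurling metric of $A$ is a real symmetric $n\times n$ matrix $L$ with $d\big((s^{-1})^TL\,\mathbf{d}s\big)=0$ on an open ball centered at $\mathbf{1}_A$ consisting only of units; the anti-rotor $\mathfrak{u}_A$ is the real vector space of all uncurling metrics of $A$. *)

theory Defs
  imports "HOL-Analysis.Analysis"
begin

text \<open>An algebra on R^n (n = CARD('n)): a bilinear, associative multiplication
  with two-sided unit e.  Bilinearity in the standard basis is the same as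
  being given by structure constants.\<close>
definition is_algebra :: "(real^'n \<Rightarrow> real^'n \<Rightarrow> real^'n) \<Rightarrow> real^'n \<Rightarrow> bool" where
  "is_algebra mul e \<longleftrightarrow> bilinear mul
     \<and> (\<forall>x y z. mul (mul x y) z = mul x (mul y z))
     \<and> (\<forall>x. mul e x = x \<and> mul x e = x)"

definition alg_unit :: "(real^'n \<Rightarrow> real^'n \<Rightarrow> real^'n) \<Rightarrow> real^'n \<Rightarrow> real^'n \<Rightarrow> bool" where
  "alg_unit mul e s \<longleftrightarrow> (\<exists>t. mul s t = e \<and> mul t s = e)"

definition alg_inv :: "(real^'n \<Rightarrow> real^'n \<Rightarrow> real^'n) \<Rightarrow> real^'n \<Rightarrow> real^'n \<Rightarrow> real^'n" where
  "alg_inv mul e s = (THE t. mul s t = e \<and> mul t s = e)"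

text \<open>A 1-form \<omega> = \<Sum>_j w_j(s) dx_j, given by its coefficient vector field w,
  is closed (d\<omega> = 0) at s: w is differentiable at s and its Jacobian is
  symmetric, i.e. \<partial>w_j/\<partial>x_i = \<partial>w_i/\<partial>x_j.\<close>
definition closed_form_at :: "(real^'n \<Rightarrow> real^'n) \<Rightarrow> real^'n \<Rightarrow> bool" where
  "closed_form_at w s \<longleftrightarrow> (\<exists>D. (w has_derivative D) (at s) \<and> (\<forall>u v. D u \<bullet> v = D v \<bullet> u))"

text \<open>(s^{-1})^T L ds has coefficient (row) vector (s^{-1})^T L, i.e. the vector
  alg_inv s v* L.\<close>
definition uncurling_metric ::
  "(real^'n \<Rightarrow> real^'n \<Rightarrow> real^'n) \<Rightarrow> real^'n \<Rightarrow> real^'n^'n \<Rightarrow> bool" where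
  "uncurling_metric mul e L \<longleftrightarrow> transpose L = L \<and>
     (\<exists>r>0. (\<forall>s\<in>ball e r. alg_unit mul e s) \<and>
            (\<forall>s\<in>ball e r. closed_form_at (\<lambda>x. alg_inv mul e x v* L) s))"

definition anti_rotor :: "(real^'n \<Rightarrow> real^'n \<Rightarrow> real^'n) \<Rightarrow> real^'n \<Rightarrow> (real^'n^'n) set" where
  "anti_rotor mul e = {L. uncurling_metric mul e L}"

definition two_sided_ideal :: "(real^'n \<Rightarrow> real^'n \<Rightarrow> real^'n) \<Rightarrow> (real^'n) set \<Rightarrow> bool" where
  "two_sided_ideal mul I \<longleftrightarrow> subspace I \<and> (\<forall>a\<in>UNIV. \<forall>x\<in>I. mul a x \<in> I \<and> mul x a \<in> I)"

definition simple_algebra :: "(real^'n \<Rightarrow> real^'n \<Rightarrow> real^'n) \<Rightarrow> real^'n \<Rightarrow> bool" where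
  "simple_algebra mul e \<longleftrightarrow> e \<noteq> 0 \<and>
     (\<forall>I. two_sided_ideal mul I \<longrightarrow> I = {0} \<or> I = UNIV)"

end

theory Submission imports Defs begin

lemma alg_lin:
  assumes "is_algebra mul e"
  shows "linear (mul a)" "linear (\<lambda>x. mul x b)" "mul (mul x y) z = mul x (mul y z)"
    "mul e x = x" "mul x e = x"
  using assms unfolding is_algebra_def bilinear_def by auto

lemma alg_inv_props:
  assumes "is_algebra mul e" "alg_unit mul e s"
  shows "mul s (alg_inv mul e s) = e" "mul (alg_inv mul e s) s = e"
proof -
  obtain t where t: "mul s t = e" "mul t s = e" using assms(2) unfolding alg_unit_def by blast
  have u: "t' = t" if "mul s t' = e" "mul t' s = e" for t'
  proof -
    have "t' = mul t' e" using alg_lin[OF assms(1)] by simp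
    also have "\<dots> = mul (mul t' s) t" using t alg_lin(3)[OF assms(1)] by simp
    also have "\<dots> = t" using that alg_lin[OF assms(1)] by simp
    finally show ?thesis .
  qed
  have "alg_inv mul e s = t" unfolding alg_inv_def
  proof (rule the_equality)
    show "mul s t = e \<and> mul t s = e" using t by simp
  next
    fix t' assume "mul s t' = e \<and> mul t' s = e"
    then show "t' = t" using u by blast
  qed
  then show "mul s (alg_inv mul e s) = e" "mul (alg_inv mul e s) s = e" using t by auto
qed

lemma trace_functional:
  fixes mul :: "real^'n \<Rightarrow> real^'n \<Rightarrow> real^'n"
  assumes alg: "is_algebra mul e" and sub: "subspace I" and nU: "y \<notin> I"
    and id2: "\<And>a x. x \<in> I \<Longrightarrow> mul a x \<in> I \<and> mul x a \<in> I"
  obtains tf :: "real^'n \<Rightarrow> real" where "linear tf" "\<And>a b. tf (mul a b) = tf (mul b a)"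
    "\<And>x. x \<in> I \<Longrightarrow> tf x = 0" "tf e \<noteq> 0"
proof -
  obtain B where B: "B \<subseteq> I" "pairwise orthogonal B" "\<And>x. x \<in> B \<Longrightarrow> norm x = 1"
    "independent B" "span B = I"
    using orthonormal_basis_subspace[OF sub] by metis
  have finB: "finite B" using B(4) finiteI_independent by blast
  define P where "P x = (\<Sum>b\<in>B. (b \<bullet> x) *\<^sub>R b)" for x
  define Q where "Q x = x - P x" for x
  have linP: "linear P" unfolding P_def
    by (rule linearI) (auto simp: inner_add_right scaleR_add_left sum.distrib scaleR_sum_right)
  have linQ: "linear Q" unfolding Q_def
    by (rule linearI) (simp_all add: linear_add[OF linP] linear_scale[OF linP] algebra_simps)
  have Pb: "P b = b" if "b \<in> B" for b
  proof -
    have "P b = (\<Sum>b'\<in>B. if b' = b then b else 0)" unfolding P_def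
      apply (rule sum.cong, simp)
      using B(2,3) that by (auto simp: pairwise_def orthogonal_def dot_square_norm)
    then show ?thesis using finB that by simp
  qed
  have PI: "P x = x" if "x \<in> I" for x
    using linear_eq_on_span[OF linP linear_id, of B x] Pb that B(5) by auto
  have Pin: "P x \<in> I" for x unfolding P_def
    using B(1) sub by (auto intro!: subspace_sum subspace_scale)
  have QI: "Q x = 0" if "x \<in> I" for x using PI that Q_def by simp
  have QQ: "Q (Q x) = Q x" for x
    using linQ QI[OF Pin[of x]] by (simp add: Q_def[of x] linear_diff)
  have Psym: "P x \<bullet> z = x \<bullet> P z" for x z
    unfolding P_def by (simp add: inner_sum_left inner_sum_right inner_commute mult.commute)
  have Qsym: "Q x \<bullet> z = x \<bullet> Q z" for x z
    using Psym by (simp add: Q_def inner_diff_left inner_diff_right)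
  have Qy: "Q y \<noteq> 0" using Pin[of y] nU Q_def by force
  have key: "Q (mul a z) = Q (mul a (Q z))" for a z
  proof -
    have "mul a z = mul a (P z) + mul a (Q z)"
      using alg_lin(1)[OF alg, of a] by (simp add: Q_def linear_add[symmetric])
    moreover have "Q (mul a (P z)) = 0" using QI id2 Pin by blast
    ultimately show ?thesis using linQ by (simp add: linear_add)
  qed
  define tf where "tf x = trace (matrix (Q \<circ> mul x))" for x
  have tf_eq: "tf x = (\<Sum>i\<in>UNIV. Q (mul x (axis i 1)) $ i)" for x
    unfolding tf_def trace_def matrix_def by simp
  have h1: "linear tf"
  proof (rule linearI)
    fix x1 x2 :: "real^'n" and c :: real
    have a1: "mul (x1+x2) d = mul x1 d + mul x2 d" for d
      using linear_add[OF alg_lin(2)[OF alg]] by simp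
    have a2: "mul (c *\<^sub>R x1) d = c *\<^sub>R mul x1 d" for d
      using linear_scale[OF alg_lin(2)[OF alg]] by simp
    show "tf (x1 + x2) = tf x1 + tf x2"
      unfolding tf_eq a1 by (simp add: linear_add[OF linQ] sum.distrib)
    show "tf (c *\<^sub>R x1) = c *\<^sub>R tf x1"
      unfolding tf_eq a2 by (simp add: linear_scale[OF linQ] sum_distrib_left)
  qed
  moreover have h2: "tf (mul a b) = tf (mul b a)" for a b
  proof -
    have lin1: "linear (Q \<circ> mul c)" for c using linQ alg_lin(1)[OF alg] linear_compose by blast
    have eq: "Q \<circ> mul (mul c d) = (Q \<circ> mul c) \<circ> (Q \<circ> mul d)" for c d
      using key alg_lin(3)[OF alg] by (auto simp: fun_eq_iff)
    have "tf (mul a b) = trace (matrix (Q \<circ> mul a) ** matrix (Q \<circ> mul b))"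
      unfolding tf_def eq using matrix_compose[OF lin1 lin1] by simp
    also have "\<dots> = trace (matrix (Q \<circ> mul b) ** matrix (Q \<circ> mul a))" by (rule trace_mul_sym)
    also have "\<dots> = tf (mul b a)"
      unfolding tf_def eq using matrix_compose[OF lin1 lin1] by simp
    finally show ?thesis .
  qed
  moreover have h3: "tf x = 0" if "x \<in> I" for x
    unfolding tf_eq using QI id2 that by simp
  moreover have h4: "tf e \<noteq> 0"
  proof -
    have "tf e = (\<Sum>i\<in>UNIV. Q (axis i 1) \<bullet> Q (axis i 1))"
      unfolding tf_eq alg_lin(4)[OF alg]
    proof (rule sum.cong)
      fix i
      have "Q (axis i 1) $ i = Q (Q (axis i 1)) \<bullet> axis i 1" by (simp add: QQ inner_axis)
      also have "\<dots> = Q (axis i 1) \<bullet> Q (axis i 1)" by (rule Qsym)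
      finally show "Q (axis i 1) $ i = Q (axis i 1) \<bullet> Q (axis i 1)" .
    qed simp
    moreover have "\<exists>i. Q (axis i 1) \<noteq> 0"
    proof (rule ccontr)
      assume "\<not> ?thesis"
      then have "Q = (\<lambda>_. 0)"
        by (intro linear_eq_stdbasis[OF linQ]) (auto simp: Basis_vec_def linear_zero)
      then show False using Qy by simp
    qed
    ultimately show ?thesis
      by (auto simp: sum_nonneg_eq_0_iff)
  qed
  show ?thesis by (rule that[OF h1 h2 h3 h4])
qed


lemma linear_vm: "linear (\<lambda>x::real^'n. x v* (A::real^'m^'n))"
  by (rule linearI) (simp_all add: vector_matrix_left_distrib scaleR_vector_matrix_assoc)

lemma blin_vm: "bounded_linear (\<lambda>x::real^'n. x v* (A::real^'m^'n))"
  using linear_vm linear_conv_bounded_linear by blast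

lemma form_matrix:
  fixes tf :: "real^'n \<Rightarrow> real" and mul :: "real^'n \<Rightarrow> real^'n \<Rightarrow> real^'n"
  assumes lt: "linear tf" and bl: "bilinear mul"
  shows "(a v* (\<chi> i j. tf (mul (axis i 1) (axis j 1)))) \<bullet> b = tf (mul a b)"
proof -
  let ?M = "(\<chi> i j. tf (mul (axis i 1) (axis j 1))) :: real^'n^'n"
  have "(\<lambda>a b. (a v* ?M) \<bullet> b) = (\<lambda>a b. tf (mul a b))"
  proof (rule bilinear_eq_stdbasis)
    show "bilinear (\<lambda>a b. (a v* ?M) \<bullet> b)"
      unfolding bilinear_def
    proof safe
      fix x :: "real^'n"
      show "linear (\<lambda>b. (x v* ?M) \<bullet> b)"
        using bounded_linear_inner_right linear_conv_bounded_linear by blast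
    next
      fix y :: "real^'n"
      show "linear (\<lambda>a. (a v* ?M) \<bullet> y)"
        using linear_compose[OF linear_vm, of "\<lambda>z. z \<bullet> y"] bounded_linear_inner_left
          linear_conv_bounded_linear by (auto simp: o_def bounded_linear.linear)
    qed
    show "bilinear (\<lambda>a b. tf (mul a b))"
      using bl lt unfolding bilinear_def
      by (auto intro: linear_compose[unfolded o_def])
    fix i j :: "real^'n" assume "i \<in> Basis" "j \<in> Basis"
    then obtain k l where kl: "i = axis k 1" "j = axis l 1" by (auto simp: Basis_vec_def)
    have "(axis k 1 v* ?M) \<bullet> axis l 1 = (axis k 1 v* ?M) $ l"
      by (simp add: inner_axis)
    also have "\<dots> = (\<Sum>m\<in>UNIV. (axis k 1 :: real^'n) $ m * ?M $ m $ l)"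
      by (simp add: vector_matrix_mult_def)
    also have "\<dots> = ?M $ k $ l"
      by (simp add: axis_def if_distrib[of "\<lambda>c. c * _"] cong: if_cong)
    finally have "(axis k 1 v* ?M) \<bullet> axis l 1 = ?M $ k $ l" .
    then show "(i v* ?M) \<bullet> j = tf (mul i j)" using kl by simp
  qed
  then show ?thesis by meson
qed

lemma inv_deriv:
  fixes mul :: "real^'n \<Rightarrow> real^'n \<Rightarrow> real^'n"
  assumes alg: "is_algebra mul e" and units: "\<forall>x\<in>ball e r. alg_unit mul e x"
    and s: "s \<in> ball e r"
    and D: "((\<lambda>x. alg_inv mul e x) has_derivative Di) (at s)"
  shows "Di h = - mul (alg_inv mul e s) (mul h (alg_inv mul e s))"
proof -
  have bb: "bounded_bilinear mul"
    using alg bilinear_conv_bounded_bilinear unfolding is_algebra_def by blast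
  let ?si = "alg_inv mul e s"
  have d1: "((\<lambda>x. mul x (alg_inv mul e x)) has_derivative (\<lambda>h. mul s (Di h) + mul h ?si)) (at s)"
    using bounded_bilinear.FDERIV[OF bb has_derivative_ident D] by simp
  have d2: "((\<lambda>x. e) has_derivative (\<lambda>h. mul s (Di h) + mul h ?si)) (at s)"
    by (rule has_derivative_transform_within_open[OF d1 open_ball s])
       (use units alg_inv_props[OF alg] in auto)
  have z: "(\<lambda>h. mul s (Di h) + mul h ?si) = (\<lambda>h. 0)"
    using has_derivative_unique[OF d2 has_derivative_const] .
  have "Di h = mul ?si (mul s (Di h))"
    using alg_inv_props[OF alg, of s] units s alg_lin[OF alg]
    by (metis alg_lin(3)[OF alg])
  also have "mul s (Di h) = - mul h ?si" using fun_cong[OF z, of h] by (simp add: eq_neg_iff_add_eq_0)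
  also have "mul ?si (- mul h ?si) = - mul ?si (mul h ?si)"
    using linear_neg[OF alg_lin(1)[OF alg]] by simp
  finally show ?thesis .
qed


theorem corollary6p3:
  fixes mul :: "real^'n \<Rightarrow> real^'n \<Rightarrow> real^'n" and e :: "real^'n"
  assumes "is_algebra mul e"
    and "dim (anti_rotor mul e) = 1"
    and "\<exists>L\<in>anti_rotor mul e. invertible L"
  shows "simple_algebra mul e"
proof -
  note alg = assms(1)
  obtain L where L: "L \<in> anti_rotor mul e" "invertible L" using assms(3) by blast
  obtain Li where Li: "L ** Li = mat 1" using L(2) unfolding invertible_def by blast
  from L(1) obtain r where r: "r > 0" "\<forall>s\<in>ball e r. alg_unit mul e s"
    "\<forall>s\<in>ball e r. closed_form_at (\<lambda>x. alg_inv mul e x v* L) s"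
    unfolding anti_rotor_def uncurling_metric_def by blast
  have zvm: "0 v* (A::real^'n^'n) = 0" for A by (simp add: vector_matrix_mult_def vec_eq_iff)
  have vmz: "x v* (0::real^'n^'n) = 0" for x by (simp add: vector_matrix_mult_def vec_eq_iff)
  have xL: "x v* L \<noteq> 0" if "x \<noteq> 0" for x
  proof
    assume "x v* L = 0"
    then have "(x v* L) v* Li = 0" using zvm by simp
    then show False using that by (simp add: vector_matrix_mul_assoc Li)
  qed
  have e0: "e \<noteq> 0"
  proof
    assume "e = 0"
    then have "x = 0" for x :: "real^'n"
      using alg_lin(4)[OF alg, of x] linear_0[OF alg_lin(2)[OF alg, of x]] by simp
    then show False by (metis axis_nth zero_index zero_neq_one)
  qed
  moreover have "I = {0} \<or> I = UNIV" if I: "two_sided_ideal mul I" for I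
  proof (rule ccontr)
    assume nI: "\<not> (I = {0} \<or> I = UNIV)"
    have sub: "subspace I" and id2: "\<And>a x. x \<in> I \<Longrightarrow> mul a x \<in> I \<and> mul x a \<in> I"
      using I unfolding two_sided_ideal_def by auto
    obtain x where x: "x \<in> I" "x \<noteq> 0" using nI subspace_0[OF sub] by blast
    obtain y where y: "y \<notin> I" using nI by blast
    obtain tf :: "real^'n \<Rightarrow> real" where tf: "linear tf" "\<And>a b. tf (mul a b) = tf (mul b a)"
      "\<And>x. x \<in> I \<Longrightarrow> tf x = 0" "tf e \<noteq> 0"
      using trace_functional[OF alg sub y id2] by metis
    define L' :: "real^'n^'n" where "L' = (\<chi> i j. tf (mul (axis i 1) (axis j 1)))"
    have bl: "bilinear mul" using alg unfolding is_algebra_def by blast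
    have form: "(a v* L') \<bullet> b = tf (mul a b)" for a b
      unfolding L'_def by (rule form_matrix[OF tf(1) bl])
    have symL': "transpose L' = L'"
      by (simp add: L'_def transpose_def vec_eq_iff tf(2))
    have closed: "closed_form_at (\<lambda>x. alg_inv mul e x v* L') s" if s: "s \<in> ball e r" for s
    proof -
      obtain D where D: "((\<lambda>x. alg_inv mul e x v* L) has_derivative D) (at s)"
        using r(3) s unfolding closed_form_at_def by blast
      have Dinv: "((\<lambda>x. alg_inv mul e x) has_derivative (\<lambda>h. D h v* Li)) (at s)"
        using bounded_linear.has_derivative[OF blin_vm[of Li] D]
        by (simp add: vector_matrix_mul_assoc Li)
      have Dw: "((\<lambda>x. alg_inv mul e x v* L') has_derivative (\<lambda>h. (D h v* Li) v* L')) (at s)"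
        using bounded_linear.has_derivative[OF blin_vm[of L'] Dinv] by simp
      define si where "si = alg_inv mul e s"
      have fo: "D h v* Li = - mul si (mul h si)" for h
        unfolding si_def using inv_deriv[OF alg r(2) s Dinv] .
      have sym: "((D u v* Li) v* L') \<bullet> v = - tf (mul (mul si u) (mul si v))" for u v
      proof -
        have "((D u v* Li) v* L') \<bullet> v = tf (mul (- mul si (mul u si)) v)" using form fo by simp
        also have "mul (- mul si (mul u si)) v = - mul (mul si u) (mul si v)"
          using linear_neg[OF alg_lin(2)[OF alg, of v]] alg_lin(3)[OF alg] by simp
        also have "tf (- mul (mul si u) (mul si v)) = - tf (mul (mul si u) (mul si v))"
          using linear_neg[OF tf(1)] by simp
        finally show ?thesis .
      qed
      show ?thesis unfolding closed_form_at_def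
      proof (intro exI conjI allI)
        show "((\<lambda>x. alg_inv mul e x v* L') has_derivative (\<lambda>h. (D h v* Li) v* L')) (at s)"
          by (rule Dw)
        fix u v :: "real^'n"
        show "((D u v* Li) v* L') \<bullet> v = ((D v v* Li) v* L') \<bullet> u"
          unfolding sym using tf(2) by simp
      qed
    qed
    have L'_in: "L' \<in> anti_rotor mul e"
      unfolding anti_rotor_def uncurling_metric_def using symL' r closed by blast
    have xL': "x v* L' = 0"
    proof -
      have "(x v* L') \<bullet> (x v* L') = 0" using form tf(3) id2 x(1) by simp
      then show ?thesis by simp
    qed
    have L'nz: "L' \<noteq> 0"
    proof
      assume "L' = 0"
      then have "tf (mul e e) = 0" using form[of e e] vmz by simp
      then show False using tf(4) alg_lin(4)[OF alg] by simp
    qed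
    have notspan: "L' \<notin> span {L}"
    proof
      assume "L' \<in> span {L}"
      then obtain k where k: "L' = k *\<^sub>R L" by (auto simp: span_singleton)
      have "k \<noteq> 0" using L'nz k by auto
      moreover have "k *\<^sub>R (x v* L) = 0" using xL' k by (simp add: vector_scaleR_matrix_ac)
      ultimately show False using xL[OF x(2)] by simp
    qed
    have Lnz: "L \<noteq> 0" using xL[OF x(2)] vmz by auto
    have ind: "independent {L', L}"
      by (rule independent_insertI[OF notspan]) (rule independent_insertI, use Lnz in \<open>auto simp: independent_empty\<close>)
    have "card {L', L} \<le> dim (anti_rotor mul e)"
      by (rule independent_card_le_dim) (use L'_in L(1) ind in auto)
    moreover have "L' \<noteq> L" using notspan span_base by blast
    ultimately show False using assms(2) by simp
  qed
  ultimately show ?thesis unfolding simple_algebra_def by blast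
qed

end
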